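(* Let $P_1,\ldots,P_d$ be real-valued random variables (test statistics, not necessarily $p$-values) associated with null hypotheses $H_1,\ldots,H_d$, and let $I_0\subseteq\{1,\ldots,d\}$ be the index set of true null hypotheses. Fix $\tilde\alpha\in(0,1)$ and consider the step-up procedure based on $P_1,\ldots,P_d$ with critical constants $\alpha_i=i\tilde\alpha/d$, $i=1,\ldots,d$. Fix $c\in(\tilde\alpha,1]$ and a subset $\mathcal S\subseteq I_0$, and assume: (1) for each $i\in I_0\setminus\mathcal S$, $P_i$ is PLTDN on $\boldsymbol P_{-i}$ over $(0,c)$; (2) for each $i\in\mathcal S$ there is a random variable $\hat P_i$ such that, conditionally on $\boldsymbol P_{-i}$, $\hat P_i$ is a nondecreasing function of $P_i$ and is stochastically smaller than $P_i$, i.e. almost surely $\Pr(P_i\le u\mid \boldsymbol P_{-i})\le \Pr(\hat P_i\le u\mid \boldsymbol P_{-i})$ for all $u\in(0,c)$; and $\hat P_i$ is PLTDN on $\boldsymbol P_{-i}$ over $(0,c)$. Then the false discovery rate of this step-up procedure satisfies $$\mathrm{FDR}\le \sum_{i\in I_0\setminus\mathcal S}\Pr\big(P_i\le \tilde\alpha/d\big)+\sum_{i\in \mathcal S}\Pr\big(\hat P_i\le \tilde\alpha/d\big).$$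
   Context: Step-up procedure with critical constants $\alpha_1\le\cdots\le\alpha_d$: order the statistics as $P_{(1)}\le\cdots\le P_{(d)}$, let $R=\max\{i: P_{(i)}\le\alpha_i\}$, and reject $H_i$ for all $i$ with $P_i\le P_{(R)}$ if $R$ exists; otherwise reject nothing. The false discovery rate is $\mathrm{FDR}=E[V/\max(R,1)]$, where $V$ is the number of rejected true nulls and $R$ the number of rejections. $\boldsymbol P_{-i}$ denotes the vector $(P_1,\ldots,P_d)$ with the $i$-th coordinate removed. PLTDN (positive left-tail dependence under the null): for $i\in I_0$ and $c\in(0,1]$, a random variable $Q$ is said to be PLTDN on $\boldsymbol P_{-i}$ over $(0,c)$ if either (a) $u\mapsto \Pr(Q\le u\mid\boldsymbol P_{-i})/u$ is (almost surely) nonincreasing on $(0,c)$; or (b) for every coordinatewise nondecreasing function $g$ of $\boldsymbol P_{-i}$ and every fixed constant $t$ (with $\Pr(g(\boldsymbol P_{-i})\le t)>0$), $u\mapsto\Pr(Q\le u\mid g(\boldsymbol P_{-i})\le t)/u$ is nonincreasing on $(0,c)$. *)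

theory Defs
  imports "HOL-Probability.Probability"
begin

text \<open>Index set of hypotheses is {1..d}.  The vector P_{-i}, represented as a function
  on nat which is 0 outside {1..d}-{i}.\<close>
definition Pminus :: "nat \<Rightarrow> (nat \<Rightarrow> 'a \<Rightarrow> real) \<Rightarrow> nat \<Rightarrow> 'a \<Rightarrow> (nat \<Rightarrow> real)" where
  "Pminus d P i \<omega> = (\<lambda>j. if j \<in> {1..d} - {i} then P j \<omega> else 0)"

definition sigma_Pminus :: "'a measure \<Rightarrow> nat \<Rightarrow> (nat \<Rightarrow> 'a \<Rightarrow> real) \<Rightarrow> nat \<Rightarrow> 'a measure" where
  "sigma_Pminus M d P i = sigma (space M)
     (\<Union>j\<in>{1..d} - {i}. {P j -` B \<inter> space M | B. B \<in> sets borel})"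

definition cond_prob_le :: "'a measure \<Rightarrow> nat \<Rightarrow> (nat \<Rightarrow> 'a \<Rightarrow> real) \<Rightarrow> nat \<Rightarrow> ('a \<Rightarrow> real) \<Rightarrow> real \<Rightarrow> 'a \<Rightarrow> real" where
  "cond_prob_le M d P i Q u = real_cond_exp M (sigma_Pminus M d P i)
     (\<lambda>\<omega>. indicator {\<omega> \<in> space M. Q \<omega> \<le> u} \<omega>)"

definition PLTDN_a :: "'a measure \<Rightarrow> nat \<Rightarrow> (nat \<Rightarrow> 'a \<Rightarrow> real) \<Rightarrow> nat \<Rightarrow> ('a \<Rightarrow> real) \<Rightarrow> real \<Rightarrow> bool" where
  "PLTDN_a M d P i Q c \<longleftrightarrow>
     (\<forall>u v. 0 < u \<and> u \<le> v \<and> v < c \<longrightarrow>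
        (AE \<omega> in M. cond_prob_le M d P i Q v \<omega> / v \<le> cond_prob_le M d P i Q u \<omega> / u))"

definition coord_mono :: "nat \<Rightarrow> nat \<Rightarrow> ((nat \<Rightarrow> real) \<Rightarrow> real) \<Rightarrow> bool" where
  "coord_mono d i g \<longleftrightarrow> (\<forall>x y. (\<forall>j\<in>{1..d} - {i}. x j \<le> y j) \<longrightarrow> g x \<le> g y)"

definition PLTDN_b :: "'a measure \<Rightarrow> nat \<Rightarrow> (nat \<Rightarrow> 'a \<Rightarrow> real) \<Rightarrow> nat \<Rightarrow> ('a \<Rightarrow> real) \<Rightarrow> real \<Rightarrow> bool" where
  "PLTDN_b M d P i Q c \<longleftrightarrow>
     (\<forall>g t. coord_mono d i g
        \<and> {\<omega> \<in> space M. g (Pminus d P i \<omega>) \<le> t} \<in> sets M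
        \<and> measure M {\<omega> \<in> space M. g (Pminus d P i \<omega>) \<le> t} > 0 \<longrightarrow>
        (\<forall>u v. 0 < u \<and> u \<le> v \<and> v < c \<longrightarrow>
          measure M {\<omega> \<in> space M. Q \<omega> \<le> v \<and> g (Pminus d P i \<omega>) \<le> t}
            / measure M {\<omega> \<in> space M. g (Pminus d P i \<omega>) \<le> t} / v
          \<le> measure M {\<omega> \<in> space M. Q \<omega> \<le> u \<and> g (Pminus d P i \<omega>) \<le> t}
            / measure M {\<omega> \<in> space M. g (Pminus d P i \<omega>) \<le> t} / u))"

definition PLTDN :: "'a measure \<Rightarrow> nat \<Rightarrow> (nat \<Rightarrow> 'a \<Rightarrow> real) \<Rightarrow> nat \<Rightarrow> ('a \<Rightarrow> real) \<Rightarrow> real \<Rightarrow> bool" where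
  "PLTDN M d P i Q c \<longleftrightarrow> PLTDN_a M d P i Q c \<or> PLTDN_b M d P i Q c"

definition order_stat :: "nat \<Rightarrow> (nat \<Rightarrow> 'a \<Rightarrow> real) \<Rightarrow> 'a \<Rightarrow> nat \<Rightarrow> real" where
  "order_stat d P \<omega> k = sort (map (\<lambda>j. P j \<omega>) [1..<d+1]) ! (k - 1)"

definition stepup_R :: "nat \<Rightarrow> (nat \<Rightarrow> real) \<Rightarrow> (nat \<Rightarrow> 'a \<Rightarrow> real) \<Rightarrow> 'a \<Rightarrow> nat" where
  "stepup_R d alpha P \<omega> = Max ({0} \<union> {k \<in> {1..d}. order_stat d P \<omega> k \<le> alpha k})"

definition stepup_rejected :: "nat \<Rightarrow> (nat \<Rightarrow> real) \<Rightarrow> (nat \<Rightarrow> 'a \<Rightarrow> real) \<Rightarrow> 'a \<Rightarrow> nat set" where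
  "stepup_rejected d alpha P \<omega> =
     (if stepup_R d alpha P \<omega> = 0 then {}
      else {j \<in> {1..d}. P j \<omega> \<le> order_stat d P \<omega> (stepup_R d alpha P \<omega>)})"

definition FDR :: "'a measure \<Rightarrow> nat \<Rightarrow> (nat \<Rightarrow> real) \<Rightarrow> (nat \<Rightarrow> 'a \<Rightarrow> real) \<Rightarrow> nat set \<Rightarrow> real" where
  "FDR M d alpha P I0 = (\<integral>\<omega>. real (card (stepup_rejected d alpha P \<omega> \<inter> I0))
        / real (max (card (stepup_rejected d alpha P \<omega>)) 1) \<partial>M)"

end

theory Submission
  imports Defs
begin

lemma sorted_nth_le_iff:
  fixes xs :: "real list"
  assumes "sorted xs" "1 \<le> k" "k \<le> length xs"
  shows "xs ! (k - 1) \<le> a \<longleftrightarrow> k \<le> length (filter (\<lambda>x. x \<le> a) xs)"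
proof -
  have L: "length (filter (\<lambda>x. x \<le> a) xs) = card {i. i < length xs \<and> xs ! i \<le> a}"
    by (rule length_filter_conv_card)
  show ?thesis
  proof
    assume h: "xs ! (k - 1) \<le> a"
    have "{0..<k} \<subseteq> {i. i < length xs \<and> xs ! i \<le> a}"
    proof
      fix i assume "i \<in> {0..<k}"
      then have "i \<le> k - 1" "i < length xs" using assms by auto
      then have "xs ! i \<le> xs ! (k - 1)" using sorted_nth_mono[OF assms(1)] assms by auto
      then show "i \<in> {i. i < length xs \<and> xs ! i \<le> a}" using h \<open>i < length xs\<close> by auto
    qed
    then have "card {0..<k} \<le> card {i. i < length xs \<and> xs ! i \<le> a}"
      by (rule card_mono[rotated]) auto
    then show "k \<le> length (filter (\<lambda>x. x \<le> a) xs)" using L by simp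
  next
    assume h: "k \<le> length (filter (\<lambda>x. x \<le> a) xs)"
    show "xs ! (k - 1) \<le> a"
    proof (rule ccontr)
      assume "\<not> xs ! (k - 1) \<le> a"
      have "{i. i < length xs \<and> xs ! i \<le> a} \<subseteq> {0..<k-1}"
      proof
        fix i assume i: "i \<in> {i. i < length xs \<and> xs ! i \<le> a}"
        show "i \<in> {0..<k-1}"
        proof (rule ccontr)
          assume "i \<notin> {0..<k-1}"
          then have "k - 1 \<le> i" by auto
          then have "xs ! (k-1) \<le> xs ! i" using sorted_nth_mono[OF assms(1)] i by auto
          then show False using i \<open>\<not> xs ! (k - 1) \<le> a\<close> by auto
        qed
      qed
      then have "card {i. i < length xs \<and> xs ! i \<le> a} \<le> card {0..<k-1}"
        by (rule card_mono[rotated]) auto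
      then show False using h L assms by simp
    qed
  qed
qed

lemma order_stat_le:
  assumes "1 \<le> k" "k \<le> d"
  shows "order_stat d P \<omega> k \<le> a \<longleftrightarrow> k \<le> card {j\<in>{1..d}. P j \<omega> \<le> a}"
proof -
  let ?l = "map (\<lambda>j. P j \<omega>) [1..<d+1]"
  have "length (filter (\<lambda>x. x \<le> a) (sort ?l)) = length (filter (\<lambda>x. x \<le> a) ?l)"
    by (simp only: filter_sort length_sort)
  also have "\<dots> = length (filter (\<lambda>j. P j \<omega> \<le> a) [1..<d+1])"
    by (simp add: filter_map comp_def)
  also have "\<dots> = card {j\<in>{1..d}. P j \<omega> \<le> a}"
    by (subst distinct_length_filter) (auto intro!: arg_cong[where f=card])
  finally have e: "length (filter (\<lambda>x. x \<le> a) (sort ?l)) = card {j\<in>{1..d}. P j \<omega> \<le> a}" .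
  show ?thesis unfolding order_stat_def
    using sorted_nth_le_iff[of "sort ?l" k a] assms e by simp
qed

definition Rmax :: "nat \<Rightarrow> (nat \<Rightarrow> bool) \<Rightarrow> nat" where
  "Rmax d q = Max ({0} \<union> {k\<in>{1..d}. q k})"

lemma fin_sub: "finite A \<Longrightarrow> finite {k\<in>A. q k}" by (rule finite_subset[of _ A]) auto

lemma Rmax_fin: "finite ({0} \<union> {k\<in>{1..d::nat}. q k})" using fin_sub[of "{1..d}" q] by simp

lemma Rmax_le: "Rmax d q \<le> d"
  unfolding Rmax_def using Rmax_fin by (subst Max_le_iff) auto

lemma Rmax_ge_iff: "k \<le> Rmax d q \<longleftrightarrow> k = 0 \<or> (\<exists>m\<in>{k..d}. q m)"
  unfolding Rmax_def using Rmax_fin[of d q] by (subst Max_ge_iff) (auto, metis Suc_leI gr0I le_zero_eq)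

lemma Rmax_eq_iff:
  assumes "k \<in> {1..d}"
  shows "Rmax d q = k \<longleftrightarrow> q k \<and> (\<forall>m\<in>{k<..d}. \<not> q m)"
proof -
  have "Rmax d q = k \<longleftrightarrow> k \<le> Rmax d q \<and> \<not> Suc k \<le> Rmax d q" by auto
  also have "\<dots> \<longleftrightarrow> q k \<and> (\<forall>m\<in>{k<..d}. \<not> q m)"
    unfolding Rmax_ge_iff using assms
    by (auto simp: Suc_le_eq)
  finally show ?thesis .
qed

lemma Rmax_pos: "Rmax d q \<noteq> 0 \<Longrightarrow> q (Rmax d q) \<and> Rmax d q \<in> {1..d}"
proof -
  assume "Rmax d q \<noteq> 0"
  have "Rmax d q \<in> {0} \<union> {k\<in>{1..d}. q k}" unfolding Rmax_def
    using Rmax_fin by (rule Max_in) auto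
  then show ?thesis using \<open>Rmax d q \<noteq> 0\<close> by auto
qed

lemma Rmax_max: "k \<in> {1..d} \<Longrightarrow> q k \<Longrightarrow> k \<le> Rmax d q"
  unfolding Rmax_ge_iff by auto

lemma stepup_R_eq:
  fixes P :: "nat \<Rightarrow> 'a \<Rightarrow> real"
  shows "stepup_R d al P \<omega> = Rmax d (\<lambda>k. k \<le> card {j\<in>{1..d}. P j \<omega> \<le> al k})"
proof -
  have "{k\<in>{1..d}. order_stat d P \<omega> k \<le> al k} = {k\<in>{1..d}. k \<le> card {j\<in>{1..d}. P j \<omega> \<le> al k}}"
    by (intro Collect_cong conj_cong refl) (simp add: order_stat_le)
  then show ?thesis unfolding stepup_R_def Rmax_def by simp
qed

definition Rfun :: "nat \<Rightarrow> (nat \<Rightarrow> real) \<Rightarrow> nat \<Rightarrow> (nat \<Rightarrow> real) \<Rightarrow> nat" where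
  "Rfun d al i x = Rmax d (\<lambda>k. k \<le> card {j\<in>{1..d}-{i}. x j \<le> al k} + 1)"

lemma Rfun_Pminus:
  fixes P :: "nat \<Rightarrow> 'a \<Rightarrow> real"
  shows "Rfun d al i (Pminus d P i \<omega>) = Rmax d (\<lambda>k. k \<le> card {j\<in>{1..d}-{i}. P j \<omega> \<le> al k} + 1)"
proof -
  have "\<And>a. {j\<in>{1..d}-{i}. Pminus d P i \<omega> j \<le> a} = {j\<in>{1..d}-{i}. P j \<omega> \<le> a}"
    unfolding Pminus_def by auto
  then show ?thesis unfolding Rfun_def by simp
qed

lemma card_split_i:
  fixes P :: "nat \<Rightarrow> 'a \<Rightarrow> real"
  assumes "i \<in> {1..d}" "P i \<omega> \<le> a"
  shows "card {j\<in>{1..d}. P j \<omega> \<le> a} = card {j\<in>{1..d}-{i}. P j \<omega> \<le> a} + 1"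
proof -
  have "{j\<in>{1..d}. P j \<omega> \<le> a} = insert i {j\<in>{1..d}-{i}. P j \<omega> \<le> a}" using assms by auto
  moreover have "finite {j\<in>{1..d}-{i}. P j \<omega> \<le> a}" by (rule fin_sub) simp
  ultimately show ?thesis by simp
qed

lemma card_split_le:
  fixes P :: "nat \<Rightarrow> 'a \<Rightarrow> real"
  shows "card {j\<in>{1..d}. P j \<omega> \<le> a} \<le> card {j\<in>{1..d}-{i}. P j \<omega> \<le> a} + 1"
proof -
  have "{j\<in>{1..d}. P j \<omega> \<le> a} \<subseteq> insert i {j\<in>{1..d}-{i}. P j \<omega> \<le> a}" by auto
  then have "card {j\<in>{1..d}. P j \<omega> \<le> a} \<le> card (insert i {j\<in>{1..d}-{i}. P j \<omega> \<le> a})"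
    by (rule card_mono[rotated]) auto
  also have "\<dots> \<le> card {j\<in>{1..d}-{i}. P j \<omega> \<le> a} + 1" by (simp add: card_insert_if)
  finally show ?thesis .
qed

lemma key_R_Ri:
  fixes P :: "nat \<Rightarrow> 'a \<Rightarrow> real"
  assumes "i \<in> {1..d}" "k \<in> {1..d}" "P i \<omega> \<le> al k" "mono al"
  shows "stepup_R d al P \<omega> = k \<longleftrightarrow> Rfun d al i (Pminus d P i \<omega>) = k"
proof -
  have eq: "(m \<le> card {j\<in>{1..d}. P j \<omega> \<le> al m}) = (m \<le> card {j\<in>{1..d}-{i}. P j \<omega> \<le> al m} + 1)"
    if "m \<in> {k..d}" for m
  proof -
    have "al k \<le> al m" using that assms(4) by (auto dest: monoD)
    then show ?thesis using card_split_i[OF assms(1), of P \<omega> "al m"] assms(3) by simp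
  qed
  have e1: "(k \<le> card {j\<in>{1..d}. P j \<omega> \<le> al k}) = (k \<le> card {j\<in>{1..d}-{i}. P j \<omega> \<le> al k} + 1)"
    using eq[of k] assms(2) by auto
  have e2: "(\<forall>m\<in>{k<..d}. \<not> m \<le> card {j\<in>{1..d}. P j \<omega> \<le> al m}) = 
     (\<forall>m\<in>{k<..d}. \<not> m \<le> card {j\<in>{1..d}-{i}. P j \<omega> \<le> al m} + 1)"
    using eq by (meson greaterThanAtMost_iff atLeastAtMost_iff less_imp_le)
  show ?thesis unfolding stepup_R_eq Rfun_Pminus Rmax_eq_iff[OF assms(2)]
    using e1 e2 by blast
qed

lemma rejected_eq:
  fixes P :: "nat \<Rightarrow> 'a \<Rightarrow> real"
  assumes "stepup_R d al P \<omega> \<noteq> 0" "mono al"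
  shows "stepup_rejected d al P \<omega> = {j\<in>{1..d}. P j \<omega> \<le> al (stepup_R d al P \<omega>)}"
    and "card (stepup_rejected d al P \<omega>) = stepup_R d al P \<omega>"
proof -
  define R where "R = stepup_R d al P \<omega>"
  have R: "R \<le> card {j\<in>{1..d}. P j \<omega> \<le> al R}" "R \<in> {1..d}"
    using Rmax_pos[of d] assms(1) unfolding R_def stepup_R_eq by auto
  have cardR: "card {j\<in>{1..d}. P j \<omega> \<le> al R} = R"
  proof (rule ccontr)
    assume "card {j\<in>{1..d}. P j \<omega> \<le> al R} \<noteq> R"
    then have gt: "R < card {j\<in>{1..d}. P j \<omega> \<le> al R}" using R by auto
    define m where "m = card {j\<in>{1..d}. P j \<omega> \<le> al R}"
    have "m \<le> d" unfolding m_def by (rule order.trans[OF card_mono[of "{1..d}"]]) auto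
    have "al R \<le> al m" using gt assms(2) unfolding m_def by (meson monoD less_imp_le)
    then have "{j\<in>{1..d}. P j \<omega> \<le> al R} \<subseteq> {j\<in>{1..d}. P j \<omega> \<le> al m}" by auto
    then have "m \<le> card {j\<in>{1..d}. P j \<omega> \<le> al m}" unfolding m_def
      by (rule card_mono[rotated]) auto
    then have "m \<le> R" unfolding R_def stepup_R_eq
      using \<open>m \<le> d\<close> gt R(2) by (intro Rmax_max) (auto simp: m_def)
    then show False using gt m_def by simp
  qed
  have os: "order_stat d P \<omega> R \<le> al R" using order_stat_le[of R d P \<omega>] R by auto
  have sub: "{j\<in>{1..d}. P j \<omega> \<le> order_stat d P \<omega> R} \<subseteq> {j\<in>{1..d}. P j \<omega> \<le> al R}"
    using os by auto
  have "R \<le> card {j\<in>{1..d}. P j \<omega> \<le> order_stat d P \<omega> R}"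
    using order_stat_le[of R d P \<omega> "order_stat d P \<omega> R"] R by auto
  have "{j\<in>{1..d}. P j \<omega> \<le> order_stat d P \<omega> R} = {j\<in>{1..d}. P j \<omega> \<le> al R}"
  proof (rule card_subset_eq)
    show "finite {j\<in>{1..d}. P j \<omega> \<le> al R}" by (rule fin_sub) simp
    then have "card {j\<in>{1..d}. P j \<omega> \<le> order_stat d P \<omega> R} \<le> card {j\<in>{1..d}. P j \<omega> \<le> al R}"
      using sub by (rule card_mono)
    then show "card {j\<in>{1..d}. P j \<omega> \<le> order_stat d P \<omega> R} = card {j\<in>{1..d}. P j \<omega> \<le> al R}"
      using cardR \<open>R \<le> card {j\<in>{1..d}. P j \<omega> \<le> order_stat d P \<omega> R}\<close> by linarith
  qed (rule sub)
  then show "stepup_rejected d al P \<omega> = {j\<in>{1..d}. P j \<omega> \<le> al (stepup_R d al P \<omega>)}"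
    unfolding stepup_rejected_def using assms(1) R_def by simp
  then show "card (stepup_rejected d al P \<omega>) = stepup_R d al P \<omega>" using cardR R_def by simp
qed

lemma sum_if_const:
  assumes "finite A"
  shows "(\<Sum>i\<in>A. if Q i then c else 0) = real (card {i\<in>A. Q i}) * (c::real)"
  using sum.inter_filter[OF assms, of "\<lambda>_. c" Q, symmetric] by simp

lemma integrand_eq:
  fixes P :: "nat \<Rightarrow> 'a \<Rightarrow> real"
  assumes "I0 \<subseteq> {1..d}" "mono al"
  shows "real (card (stepup_rejected d al P \<omega> \<inter> I0)) / real (max (card (stepup_rejected d al P \<omega>)) 1)
   = (\<Sum>i\<in>I0. \<Sum>k\<in>{1..d}. if P i \<omega> \<le> al k \<and> Rfun d al i (Pminus d P i \<omega>) = k then 1 / real k else 0)"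
proof -
  define R where "R = stepup_R d al P \<omega>"
  have fin: "finite I0" using assms(1) finite_subset by blast
  have inner: "(\<Sum>k\<in>{1..d}. if P i \<omega> \<le> al k \<and> Rfun d al i (Pminus d P i \<omega>) = k then 1 / real k else 0)
     = (\<Sum>k\<in>{1..d}. if P i \<omega> \<le> al k \<and> R = k then 1 / real k else 0)" if "i \<in> I0" for i
  proof (rule sum.cong[OF refl])
    fix k assume k: "k \<in> {1..d}"
    have "i \<in> {1..d}" using that assms(1) by auto
    then show "(if P i \<omega> \<le> al k \<and> Rfun d al i (Pminus d P i \<omega>) = k then 1 / real k else 0)
      = (if P i \<omega> \<le> al k \<and> R = k then 1 / real k else 0)"
      using key_R_Ri[of i d k P \<omega> al] k assms(2) unfolding R_def by auto
  qed
  show ?thesis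
  proof (cases "R = 0")
    case True
    then have "stepup_rejected d al P \<omega> = {}" unfolding stepup_rejected_def R_def by simp
    moreover have "(\<Sum>k\<in>{1..d}. if P i \<omega> \<le> al k \<and> R = k then 1 / real k else 0) = 0" for i
      using True by (intro sum.neutral) auto
    ultimately show ?thesis using inner by simp
  next
    case False
    then have Rd: "R \<in> {1..d}" using Rmax_pos[of d] unfolding R_def stepup_R_eq by blast
    have rej: "stepup_rejected d al P \<omega> = {j\<in>{1..d}. P j \<omega> \<le> al R}"
         "card (stepup_rejected d al P \<omega>) = R"
      using rejected_eq[of d al P \<omega>] False assms(2) unfolding R_def by auto
    have "stepup_rejected d al P \<omega> \<inter> I0 = {j\<in>I0. P j \<omega> \<le> al R}" using rej(1) assms(1) by auto
    then have L: "real (card (stepup_rejected d al P \<omega> \<inter> I0)) / real (max (card (stepup_rejected d al P \<omega>)) 1)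
       = real (card {j\<in>I0. P j \<omega> \<le> al R}) * (1 / real R)"
      using rej(2) False by (simp add: max_def)
    have inner2: "(\<Sum>k\<in>{1..d}. if P i \<omega> \<le> al k \<and> R = k then 1 / real k else 0)
       = (if P i \<omega> \<le> al R then 1 / real R else 0)" for i
    proof -
      have "(\<Sum>k\<in>{1..d}. if P i \<omega> \<le> al k \<and> R = k then 1 / real k else 0)
         = (\<Sum>k\<in>{1..d}. if k = R then (if P i \<omega> \<le> al R then 1 / real R else 0) else 0)"
        by (rule sum.cong) auto
      also have "\<dots> = (if P i \<omega> \<le> al R then 1 / real R else 0)" using Rd by simp
      finally show ?thesis .
    qed
    show ?thesis unfolding L using inner inner2 sum_if_const[OF fin] by simp
  qed
qed

lemma gen_Pow:
  "(\<Union>j\<in>{1..d} - {i}. {P j -` B \<inter> space M | B. B \<in> sets borel}) \<subseteq> Pow (space M)"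
  by auto

lemma space_sigma_Pminus: "space (sigma_Pminus M d P i) = space M"
  unfolding sigma_Pminus_def by (rule space_measure_of[OF gen_Pow])

lemma sets_sigma_Pminus:
  "sets (sigma_Pminus M d P i) = sigma_sets (space M) (\<Union>j\<in>{1..d} - {i}. {P j -` B \<inter> space M | B. B \<in> sets borel})"
  unfolding sigma_Pminus_def by (rule sets_measure_of[OF gen_Pow])

lemma P_meas_sigma_Pminus:
  assumes "j \<in> {1..d} - {i}"
  shows "P j \<in> borel_measurable (sigma_Pminus M d P i)"
proof (rule measurableI)
  fix B :: "real set" assume "B \<in> sets borel"
  then show "P j -` B \<inter> space (sigma_Pminus M d P i) \<in> sets (sigma_Pminus M d P i)"
    unfolding space_sigma_Pminus sets_sigma_Pminus using assms
    by (intro sigma_sets.Basic) blast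
qed auto

lemma subalg_sigma_Pminus:
  assumes "\<And>j. j \<in> {1..d} \<Longrightarrow> P j \<in> borel_measurable M"
  shows "subalgebra M (sigma_Pminus M d P i)"
  unfolding subalgebra_def
proof
  have "(\<Union>j\<in>{1..d} - {i}. {P j -` B \<inter> space M | B. B \<in> sets borel}) \<subseteq> sets M"
    using assms by (auto intro: measurable_sets)
  then show "sets (sigma_Pminus M d P i) \<subseteq> sets M"
    unfolding sets_sigma_Pminus by (rule sets.sigma_sets_subset)
qed (rule space_sigma_Pminus)

lemma card_as_sum:
  assumes "finite J"
  shows "real (card {j\<in>J. P j \<omega> \<le> a}) = (\<Sum>j\<in>J. if P j \<omega> \<le> a then 1 else 0)"
  using sum_if_const[OF assms, of "\<lambda>j. P j \<omega> \<le> a" 1] by simp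

lemma pred_cnt:
  fixes P :: "nat \<Rightarrow> 'a \<Rightarrow> real"
  assumes "finite J" "\<And>j. j \<in> J \<Longrightarrow> P j \<in> borel_measurable N"
  shows "Measurable.pred N (\<lambda>\<omega>. m \<le> card {j\<in>J. P j \<omega> \<le> a} + 1)"
proof -
  have "(\<lambda>\<omega>. (\<Sum>j\<in>J. if P j \<omega> \<le> a then 1 else 0::real)) \<in> borel_measurable N"
    using assms(2) by (intro borel_measurable_sum) measurable
  then have "Measurable.pred N (\<lambda>\<omega>. real m \<le> (\<Sum>j\<in>J. if P j \<omega> \<le> a then 1 else 0::real) + 1)"
    by measurable
  moreover have "(m \<le> card {j\<in>J. P j \<omega> \<le> a} + 1) \<longleftrightarrow> real m \<le> (\<Sum>j\<in>J. if P j \<omega> \<le> a then 1 else 0::real) + 1" for \<omega>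
    using card_as_sum[OF assms(1), of P \<omega> a, symmetric] by linarith
  ultimately show ?thesis by simp
qed

lemma sets_Rfun_eq:
  fixes P :: "nat \<Rightarrow> 'a \<Rightarrow> real"
  assumes "k \<in> {1..d}" "\<And>j. j \<in> {1..d}-{i} \<Longrightarrow> P j \<in> borel_measurable N"
  shows "{\<omega>\<in>space N. Rfun d al i (Pminus d P i \<omega>) = k} \<in> sets N"
proof -
  let ?q = "\<lambda>m \<omega>. m \<le> card {j\<in>{1..d}-{i}. P j \<omega> \<le> al m} + 1"
  have pq: "Measurable.pred N (?q m)" for m by (rule pred_cnt[OF _ assms(2)]) auto
  have "Measurable.pred N (\<lambda>\<omega>. ?q k \<omega> \<and> (\<forall>m\<in>{k<..d}. \<not> ?q m \<omega>))"
    using pq by measurable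
  then have "{\<omega>\<in>space N. ?q k \<omega> \<and> (\<forall>m\<in>{k<..d}. \<not> ?q m \<omega>)} \<in> sets N" by (rule pred_def[THEN iffD1])
  moreover have "{\<omega>\<in>space N. Rfun d al i (Pminus d P i \<omega>) = k} = {\<omega>\<in>space N. ?q k \<omega> \<and> (\<forall>m\<in>{k<..d}. \<not> ?q m \<omega>)}"
    by (rule Collect_cong) (simp only: Rfun_Pminus Rmax_eq_iff[OF assms(1)])
  ultimately show ?thesis by (simp only:)
qed

lemma sets_Rfun_ge:
  fixes P :: "nat \<Rightarrow> 'a \<Rightarrow> real"
  assumes "\<And>j. j \<in> {1..d}-{i} \<Longrightarrow> P j \<in> borel_measurable N"
  shows "{\<omega>\<in>space N. k \<le> Rfun d al i (Pminus d P i \<omega>)} \<in> sets N"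
proof -
  let ?q = "\<lambda>m \<omega>. m \<le> card {j\<in>{1..d}-{i}. P j \<omega> \<le> al m} + 1"
  have pq: "Measurable.pred N (?q m)" for m by (rule pred_cnt[OF _ assms]) auto
  have "Measurable.pred N (\<lambda>\<omega>. k = 0 \<or> (\<exists>m\<in>{k..d}. ?q m \<omega>))"
    using pq by measurable
  then have "{\<omega>\<in>space N. k = 0 \<or> (\<exists>m\<in>{k..d}. ?q m \<omega>)} \<in> sets N" by (rule pred_def[THEN iffD1])
  moreover have "{\<omega>\<in>space N. k \<le> Rfun d al i (Pminus d P i \<omega>)} = {\<omega>\<in>space N. k = 0 \<or> (\<exists>m\<in>{k..d}. ?q m \<omega>)}"
    by (rule Collect_cong) (simp only: Rfun_Pminus Rmax_ge_iff)
  ultimately show ?thesis by (simp only:)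
qed

lemma sfs_sigma_Pminus:
  assumes "prob_space M" "\<And>j. j \<in> {1..d} \<Longrightarrow> P j \<in> borel_measurable M"
  shows "sigma_finite_subalgebra M (sigma_Pminus M d P i)"
proof -
  interpret prob_space M by (rule assms(1))
  have "finite_measure_subalgebra M (sigma_Pminus M d P i)"
    unfolding finite_measure_subalgebra_def finite_measure_subalgebra_axioms_def
    using finite_measure_axioms subalg_sigma_Pminus[where d=d and P=P and M=M and i=i, OF assms(2)] by blast
  then show ?thesis by (rule finite_measure_subalgebra_is_sigma_finite)
qed

lemma sets_sigma_Pminus_sub:
  assumes "\<And>j. j \<in> {1..d} \<Longrightarrow> P j \<in> borel_measurable M" "C \<in> sets (sigma_Pminus M d P i)"
  shows "C \<in> sets M"
  using subalg_sigma_Pminus[where d=d and P=P and M=M and i=i, OF assms(1)] assms(2) unfolding subalgebra_def by blast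

lemma CE:
  assumes "prob_space M" "\<And>j. j \<in> {1..d} \<Longrightarrow> P j \<in> borel_measurable M"
    and Q: "Q \<in> borel_measurable M" and C: "C \<in> sets (sigma_Pminus M d P i)"
  shows "measure M ({\<omega>\<in>space M. Q \<omega> \<le> u} \<inter> C) = (\<integral>\<omega>\<in>C. cond_prob_le M d P i Q u \<omega> \<partial>M)"
    and "integrable M (cond_prob_le M d P i Q u)"
proof -
  interpret prob_space M by (rule assms(1))
  interpret sigma_finite_subalgebra M "sigma_Pminus M d P i" by (rule sfs_sigma_Pminus[OF assms(1,2)])
  define S where "S = {\<omega>\<in>space M. Q \<omega> \<le> u}"
  have S: "S \<in> sets M" unfolding S_def using Q by measurable
  have CM: "C \<in> sets M" by (rule sets_sigma_Pminus_sub[OF assms(2) C])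
  have int: "integrable M (\<lambda>\<omega>. indicator S \<omega> :: real)"
    using S by (intro integrable_real_indicator) (auto simp: emeasure_eq_measure)
  have "(\<integral>\<omega>\<in>C. indicator S \<omega> \<partial>M) = (\<integral>\<omega>\<in>C. real_cond_exp M (sigma_Pminus M d P i) (\<lambda>\<omega>. indicator S \<omega>) \<omega> \<partial>M)"
    by (rule real_cond_exp_intA[OF int C])
  moreover have "(\<integral>\<omega>\<in>C. indicator S \<omega> \<partial>M) = measure M (S \<inter> C)"
  proof -
    have "(\<integral>\<omega>\<in>C. indicator S \<omega> \<partial>M) = (\<integral>\<omega>. indicator (S \<inter> C) \<omega> \<partial>M)"
      unfolding set_lebesgue_integral_def by (rule Bochner_Integration.integral_cong) (auto simp: indicator_def)
    also have "\<dots> = measure M (S \<inter> C)" using S CM by (simp add: Int_absorb2 sets.sets_into_space Int_assoc)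
    finally show ?thesis .
  qed
  ultimately show "measure M ({\<omega>\<in>space M. Q \<omega> \<le> u} \<inter> C) = (\<integral>\<omega>\<in>C. cond_prob_le M d P i Q u \<omega> \<partial>M)"
    unfolding cond_prob_le_def S_def by simp
  show "integrable M (cond_prob_le M d P i Q u)"
    unfolding cond_prob_le_def using int unfolding S_def by (rule real_cond_exp_int(1))
qed

lemma set_int_mono_AE:
  fixes f g :: "'a \<Rightarrow> real"
  assumes "integrable M f" "integrable M g" "C \<in> sets M" "AE \<omega> in M. f \<omega> \<le> g \<omega>"
  shows "(\<integral>\<omega>\<in>C. f \<omega> \<partial>M) \<le> (\<integral>\<omega>\<in>C. g \<omega> \<partial>M)"
proof (rule set_integral_mono_AE)
  show "set_integrable M C f" unfolding set_integrable_def
    using integrable_mult_indicator[OF assms(3,1)] by simp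
  show "set_integrable M C g" unfolding set_integrable_def
    using integrable_mult_indicator[OF assms(3,2)] by simp
  show "AE x\<in>C in M. f x \<le> g x" using assms(4) by eventually_elim simp
qed

lemma ae_alg: fixes x y a kk :: real assumes "0<a" "0<kk" "x / (kk*a) \<le> y / a" shows "x \<le> kk*y"
proof -
  have "x \<le> y/a * (kk*a)" using assms pos_divide_le_eq[of "kk*a" x "y/a"] by simp
  also have "\<dots> = kk*y" using assms by simp
  finally show ?thesis .
qed
lemma div_alg: fixes X Y kk :: real assumes "0 < kk" "X \<le> kk*Y" shows "(1/kk)*X \<le> Y"
  using assms by (simp add: field_simps)

lemma b_alg: fixes X Y e a k1 k2 :: real
  assumes "0<e" "0<a" "0<k1" "0<k2" "X/e/(k2*a) \<le> Y/e/(k1*a)"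
  shows "X/k2 \<le> Y/k1"
proof -
  have "X/e/(k2*a) = (X/k2)/(e*a)" "Y/e/(k1*a) = (Y/k1)/(e*a)" by (simp_all add: field_simps)
  then have "(X/k2)/(e*a) \<le> (Y/k1)/(e*a)" using assms(5) by (simp only:)
  moreover have "0 < e*a" using assms(1,2) by simp
  ultimately have "(X/k2)/(e*a) * (e*a) \<le> (Y/k1)/(e*a) * (e*a)" by (intro mult_right_mono) auto
  moreover have "(X/k2)/(e*a) * (e*a) = X/k2" "(Y/k1)/(e*a) * (e*a) = Y/k1"
    using assms(1,2) by simp_all
  ultimately show ?thesis by simp
qed

lemma telescope:
  fixes x y :: "nat \<Rightarrow> real"
  assumes "\<And>k. 1 \<le> k \<Longrightarrow> k < n \<Longrightarrow> x (Suc k) \<le> y k" "1 \<le> n"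
  shows "(\<Sum>k\<in>{1..n}. x k - y k) \<le> x 1 - y n"
  using assms
proof (induction n)
  case 0 then show ?case by simp
next
  case (Suc n)
  show ?case
  proof (cases "n = 0")
    case True then show ?thesis by simp
  next
    case False
    then have IH: "(\<Sum>k\<in>{1..n}. x k - y k) \<le> x 1 - y n" using Suc by auto
    have "x (Suc n) \<le> y n" using Suc.prems(1)[of n] False by simp
    then show ?thesis using IH by (simp add: sum.cl_ivl_Suc)
  qed
qed

lemma Rmax_mono: "(\<And>k. q k \<Longrightarrow> q' k) \<Longrightarrow> Rmax d q \<le> Rmax d q'"
  using Rmax_ge_iff[of "Rmax d q" d q] Rmax_ge_iff[of "Rmax d q" d q'] by auto

lemma Rfun_antimono:
  assumes "\<forall>j\<in>{1..d}-{i}. x j \<le> y j"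
  shows "Rfun d al i y \<le> Rfun d al i x"
  unfolding Rfun_def
proof (rule Rmax_mono)
  fix k assume h: "k \<le> card {j \<in> {1..d} - {i}. y j \<le> al k} + 1"
  have "{j \<in> {1..d} - {i}. y j \<le> al k} \<subseteq> {j \<in> {1..d} - {i}. x j \<le> al k}"
    using assms by force
  then have "card {j \<in> {1..d} - {i}. y j \<le> al k} \<le> card {j \<in> {1..d} - {i}. x j \<le> al k}"
    by (rule card_mono[rotated]) (rule fin_sub, simp)
  then show "k \<le> card {j \<in> {1..d} - {i}. x j \<le> al k} + 1" using h by linarith
qed

context
  fixes M :: "'a measure" and d :: nat and P :: "nat \<Rightarrow> 'a \<Rightarrow> real" and aa c :: real
  assumes M: "prob_space M" and d1: "1 \<le> d" and Pm: "\<And>j. j \<in> {1..d} \<Longrightarrow> P j \<in> borel_measurable M"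
    and aa0: "0 < aa" and aac: "aa < c"
begin

abbreviation al :: "nat \<Rightarrow> real" where "al \<equiv> (\<lambda>k. real k * aa / real d)"
abbreviation Cs where "Cs i k \<equiv> {\<omega>\<in>space M. Rfun d al i (Pminus d P i \<omega>) = k}"
abbreviation Es where "Es i k \<equiv> {\<omega>\<in>space M. k \<le> Rfun d al i (Pminus d P i \<omega>)}"

lemma al_mono: "mono al"
  using aa0 d1 by (auto intro!: monoI divide_right_mono mult_right_mono)

lemma al_k: "al k = real k * al 1" by simp

lemma al1_pos: "0 < al 1" using aa0 d1 by simp

lemma al_lt: "k \<le> d \<Longrightarrow> al k < c"
proof -
  assume "k \<le> d"
  then have "real k * aa \<le> real d * aa" using aa0 by (intro mult_right_mono) auto
  then have "al k \<le> aa" using d1 by (simp add: divide_le_eq mult.commute)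
  then show ?thesis using aac by linarith
qed

lemma Cs_sigma: "k \<in> {1..d} \<Longrightarrow> Cs i k \<in> sets (sigma_Pminus M d P i)"
  using sets_Rfun_eq[of k d i P "sigma_Pminus M d P i" al] P_meas_sigma_Pminus[of _ d i P M]
  unfolding space_sigma_Pminus by blast

lemma Cs_M: "k \<in> {1..d} \<Longrightarrow> Cs i k \<in> sets M"
  using sets_Rfun_eq[of k d i P M al] Pm by blast

lemma Es_M: "Es i k \<in> sets M"
  using sets_Rfun_ge[of d i P M k al] Pm by blast

lemma Qset: fixes Q :: "'a \<Rightarrow> real" assumes [measurable]: "Q \<in> borel_measurable M" shows "{\<omega>\<in>space M. Q \<omega> \<le> u} \<in> sets M"
  by (rule borel_measurable_le) (simp_all add: assms)

lemma Rfun_range: "i \<in> {1..d} \<Longrightarrow> Rfun d al i x \<in> {1..d}"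
  unfolding Rfun_def using Rmax_le[of d] Rmax_max[of 1 d] d1 by fastforce

lemma case_a:
  fixes Q :: "'a \<Rightarrow> real"
  assumes i: "i \<in> {1..d}" and Qm: "Q \<in> borel_measurable M" and pa: "PLTDN_a M d P i Q c"
  shows "(\<Sum>k\<in>{1..d}. (1/real k) * measure M ({\<omega>\<in>space M. Q \<omega> \<le> al k} \<inter> Cs i k))
         \<le> measure M {\<omega>\<in>space M. Q \<omega> \<le> al 1}"
proof -
  interpret prob_space M by (rule M)
  have step: "(1/real k) * measure M ({\<omega>\<in>space M. Q \<omega> \<le> al k} \<inter> Cs i k)
      \<le> measure M ({\<omega>\<in>space M. Q \<omega> \<le> al 1} \<inter> Cs i k)" if k: "k \<in> {1..d}" for k
  proof -
    let ?cp = "\<lambda>u. cond_prob_le M d P i Q u"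
    have C: "Cs i k \<in> sets (sigma_Pminus M d P i)" by (rule Cs_sigma[OF k])
    have CM: "Cs i k \<in> sets M" by (rule Cs_M[OF k])
    have hyp: "0 < al 1 \<and> al 1 \<le> al k \<and> al k < c"
      using al1_pos al_mono al_lt k by (auto dest: monoD)
    have AE1: "AE \<omega> in M. ?cp (al k) \<omega> / al k \<le> ?cp (al 1) \<omega> / al 1"
      using pa hyp unfolding PLTDN_a_def by blast
    have AE2: "AE \<omega> in M. ?cp (al k) \<omega> \<le> real k * ?cp (al 1) \<omega>"
      using AE1
    proof eventually_elim
      fix \<omega> assume h: "?cp (al k) \<omega> / al k \<le> ?cp (al 1) \<omega> / al 1"
      have ak: "al k = real k * al 1" by simp
      show "?cp (al k) \<omega> \<le> real k * ?cp (al 1) \<omega>"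
      proof (rule ae_alg)
        show "0 < al 1" by (rule al1_pos)
        show "0 < real k" using k by auto
        show "?cp (al k) \<omega> / (real k * al 1) \<le> ?cp (al 1) \<omega> / al 1" using h by (simp only: ak)
      qed
    qed
    have I1: "integrable M (?cp (al k))" by (rule CE(2)[OF M Pm Qm C])
    have I2: "integrable M (?cp (al 1))" by (rule CE(2)[OF M Pm Qm C])
    have "measure M ({\<omega>\<in>space M. Q \<omega> \<le> al k} \<inter> Cs i k) = (\<integral>\<omega>\<in>Cs i k. ?cp (al k) \<omega> \<partial>M)"
      by (rule CE(1)[OF M Pm Qm C])
    also have "\<dots> \<le> (\<integral>\<omega>\<in>Cs i k. real k * ?cp (al 1) \<omega> \<partial>M)"
      by (rule set_int_mono_AE[OF I1 _ CM AE2]) (rule integrable_mult_right[OF I2])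
    also have "\<dots> = real k * (\<integral>\<omega>\<in>Cs i k. ?cp (al 1) \<omega> \<partial>M)" by simp
    also have "\<dots> = real k * measure M ({\<omega>\<in>space M. Q \<omega> \<le> al 1} \<inter> Cs i k)"
      using CE(1)[OF M Pm Qm C, of "al 1"] by simp
    finally show ?thesis using k by (intro div_alg) auto
  qed
  then have "(\<Sum>k\<in>{1..d}. (1/real k) * measure M ({\<omega>\<in>space M. Q \<omega> \<le> al k} \<inter> Cs i k))
      \<le> (\<Sum>k\<in>{1..d}. measure M ({\<omega>\<in>space M. Q \<omega> \<le> al 1} \<inter> Cs i k))"
    by (rule sum_mono)
  also have "\<dots> = measure M (\<Union>k\<in>{1..d}. {\<omega>\<in>space M. Q \<omega> \<le> al 1} \<inter> Cs i k)"
  proof (rule finite_measure_finite_Union[symmetric])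
    show "(\<lambda>k. {\<omega>\<in>space M. Q \<omega> \<le> al 1} \<inter> Cs i k) ` {1..d} \<subseteq> sets M"
      using Qset[OF Qm] Cs_M by blast
    show "disjoint_family_on (\<lambda>k. {\<omega>\<in>space M. Q \<omega> \<le> al 1} \<inter> Cs i k) {1..d}"
      unfolding disjoint_family_on_def by auto
  qed simp
  also have "\<dots> \<le> measure M {\<omega>\<in>space M. Q \<omega> \<le> al 1}"
    by (rule finite_measure_mono) (auto simp: Qset[OF Qm])
  finally show ?thesis .
qed

lemma case_b:
  fixes Q :: "'a \<Rightarrow> real"
  assumes i: "i \<in> {1..d}" and Qm: "Q \<in> borel_measurable M" and pb: "PLTDN_b M d P i Q c"
  shows "(\<Sum>k\<in>{1..d}. (1/real k) * measure M ({\<omega>\<in>space M. Q \<omega> \<le> al k} \<inter> Cs i k))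
         \<le> measure M {\<omega>\<in>space M. Q \<omega> \<le> al 1}"
proof -
  interpret prob_space M by (rule M)
  let ?A = "\<lambda>k. {\<omega>\<in>space M. Q \<omega> \<le> al k}"
  define x where "x k = measure M (?A k \<inter> Es i k) / real k" for k
  define y where "y k = measure M (?A k \<inter> Es i (Suc k)) / real k" for k
  have AM: "?A k \<in> sets M" for k by (rule Qset[OF Qm])
  let ?g = "\<lambda>z. - real (Rfun d al i z)"
  have cm: "coord_mono d i ?g" unfolding coord_mono_def using Rfun_antimono by auto
  have key: "x (Suc k) \<le> y k" if k: "1 \<le> k" "k < d" for k
  proof -
    let ?t = "- real (Suc k)"
    let ?E = "Es i (Suc k)"
    have set1: "{\<omega>\<in>space M. ?g (Pminus d P i \<omega>) \<le> ?t} = ?E" by auto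
    have set2: "{\<omega>\<in>space M. Q \<omega> \<le> v \<and> ?g (Pminus d P i \<omega>) \<le> ?t} = {\<omega>\<in>space M. Q \<omega> \<le> v} \<inter> ?E"
      for v by auto
    show ?thesis
    proof (cases "measure M ?E > 0")
      case True
      have hyp: "0 < al k \<and> al k \<le> al (Suc k) \<and> al (Suc k) < c"
      proof (intro conjI)
        show "0 < al k" using k aa0 by (intro divide_pos_pos mult_pos_pos) auto
        show "al k \<le> al (Suc k)" by (rule monoD[OF al_mono]) simp
        show "al (Suc k) < c" by (rule al_lt) (use k in simp)
      qed
      have pb1: "coord_mono d i ?g \<and> {\<omega>\<in>space M. ?g (Pminus d P i \<omega>) \<le> ?t} \<in> sets M
          \<and> measure M {\<omega>\<in>space M. ?g (Pminus d P i \<omega>) \<le> ?t} > 0 \<longrightarrow>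
        (\<forall>u v. 0 < u \<and> u \<le> v \<and> v < c \<longrightarrow>
          measure M {\<omega> \<in> space M. Q \<omega> \<le> v \<and> ?g (Pminus d P i \<omega>) \<le> ?t}
            / measure M {\<omega> \<in> space M. ?g (Pminus d P i \<omega>) \<le> ?t} / v
          \<le> measure M {\<omega> \<in> space M. Q \<omega> \<le> u \<and> ?g (Pminus d P i \<omega>) \<le> ?t}
            / measure M {\<omega> \<in> space M. ?g (Pminus d P i \<omega>) \<le> ?t} / u)"
        using pb unfolding PLTDN_b_def by blast
      have "coord_mono d i ?g \<and> {\<omega>\<in>space M. ?g (Pminus d P i \<omega>) \<le> ?t} \<in> sets M
          \<and> measure M {\<omega>\<in>space M. ?g (Pminus d P i \<omega>) \<le> ?t} > 0"
        unfolding set1 using cm Es_M True by blast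
      with pb1 hyp have ineq: "measure M {\<omega> \<in> space M. Q \<omega> \<le> al (Suc k) \<and> ?g (Pminus d P i \<omega>) \<le> ?t}
            / measure M {\<omega> \<in> space M. ?g (Pminus d P i \<omega>) \<le> ?t} / al (Suc k)
          \<le> measure M {\<omega> \<in> space M. Q \<omega> \<le> al k \<and> ?g (Pminus d P i \<omega>) \<le> ?t}
            / measure M {\<omega> \<in> space M. ?g (Pminus d P i \<omega>) \<le> ?t} / al k"
        by blast
      have ineq2: "measure M (?A (Suc k) \<inter> ?E) / measure M ?E / (real (Suc k) * al 1)
          \<le> measure M (?A k \<inter> ?E) / measure M ?E / (real k * al 1)"
        using ineq unfolding set1 set2 by simp
      have "measure M (?A (Suc k) \<inter> ?E) / real (Suc k) \<le> measure M (?A k \<inter> ?E) / real k"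
        by (rule b_alg[OF True al1_pos _ _ ineq2]) (use k in auto)
      then show ?thesis unfolding x_def y_def .
    next
      case False
      then have "measure M ?E = 0" using measure_nonneg[of M ?E] by linarith
      moreover have "measure M (?A (Suc k) \<inter> ?E) \<le> measure M ?E"
        by (rule finite_measure_mono) (auto simp: Es_M)
      ultimately have "measure M (?A (Suc k) \<inter> ?E) = 0" using measure_nonneg[of M "?A (Suc k) \<inter> ?E"] by linarith
      then show ?thesis unfolding x_def y_def by simp
    qed
  qed
  have tel: "(\<Sum>k\<in>{1..d}. x k - y k) \<le> x 1 - y d"
    by (rule telescope) (use key d1 in auto)
  have eqk: "(1/real k) * measure M (?A k \<inter> Cs i k) = x k - y k" if k: "k \<in> {1..d}" for k
  proof -
    have "?A k \<inter> Cs i k = (?A k \<inter> Es i k) - (?A k \<inter> Es i (Suc k))" by auto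
    moreover have "measure M ((?A k \<inter> Es i k) - (?A k \<inter> Es i (Suc k)))
        = measure M (?A k \<inter> Es i k) - measure M (?A k \<inter> Es i (Suc k))"
      by (rule finite_measure_Diff) (auto simp: Es_M AM)
    ultimately show ?thesis unfolding x_def y_def by (simp add: diff_divide_distrib)
  qed
  have "(\<Sum>k\<in>{1..d}. (1/real k) * measure M (?A k \<inter> Cs i k)) = (\<Sum>k\<in>{1..d}. x k - y k)"
    by (rule sum.cong[OF refl]) (rule eqk)
  also have "\<dots> \<le> x 1 - y d" by (rule tel)
  also have "\<dots> \<le> x 1" unfolding y_def by simp
  also have "\<dots> \<le> measure M (?A 1)" unfolding x_def
    using finite_measure_mono[OF _ AM[of 1], of "?A 1 \<inter> Es i 1"] by simp
  finally show ?thesis .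
qed

lemma per_i:
  fixes Q :: "'a \<Rightarrow> real"
  assumes i: "i \<in> {1..d}" and Qm: "Q \<in> borel_measurable M" and pl: "PLTDN M d P i Q c"
  shows "(\<Sum>k\<in>{1..d}. (1/real k) * measure M ({\<omega>\<in>space M. Q \<omega> \<le> al k} \<inter> Cs i k))
         \<le> measure M {\<omega>\<in>space M. Q \<omega> \<le> al 1}"
  using pl unfolding PLTDN_def using case_a[OF i Qm] case_b[OF i Qm] by blast

lemma replace:
  fixes Q :: "'a \<Rightarrow> real"
  assumes i: "i \<in> {1..d}" and Qm: "Q \<in> borel_measurable M" and k: "k \<in> {1..d}"
    and ae: "\<And>u. 0 < u \<Longrightarrow> u < c \<Longrightarrow> AE \<omega> in M. cond_prob_le M d P i (P i) u \<omega> \<le> cond_prob_le M d P i Q u \<omega>"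
  shows "measure M ({\<omega>\<in>space M. P i \<omega> \<le> al k} \<inter> Cs i k) \<le> measure M ({\<omega>\<in>space M. Q \<omega> \<le> al k} \<inter> Cs i k)"
proof -
  have C: "Cs i k \<in> sets (sigma_Pminus M d P i)" by (rule Cs_sigma[OF k])
  have Pim: "P i \<in> borel_measurable M" using Pm i by blast
  have lt: "al k < c" using k by (intro al_lt) simp
  have pos: "0 < al k" using k aa0 d1 by (intro divide_pos_pos mult_pos_pos) auto
  have "measure M ({\<omega>\<in>space M. P i \<omega> \<le> al k} \<inter> Cs i k) = (\<integral>\<omega>\<in>Cs i k. cond_prob_le M d P i (P i) (al k) \<omega> \<partial>M)"
    by (rule CE(1)[OF M Pm Pim C])
  also have "\<dots> \<le> (\<integral>\<omega>\<in>Cs i k. cond_prob_le M d P i Q (al k) \<omega> \<partial>M)"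
    by (rule set_int_mono_AE[OF CE(2)[OF M Pm Pim C] CE(2)[OF M Pm Qm C] Cs_M[OF k] ae[OF pos lt]])
  also have "\<dots> = measure M ({\<omega>\<in>space M. Q \<omega> \<le> al k} \<inter> Cs i k)"
    by (rule CE(1)[OF M Pm Qm C, symmetric])
  finally show ?thesis .
qed

lemma FDR_eq:
  assumes I0: "I0 \<subseteq> {1..d}"
  shows "FDR M d al P I0 = (\<Sum>i\<in>I0. \<Sum>k\<in>{1..d}. (1/real k) * measure M ({\<omega>\<in>space M. P i \<omega> \<le> al k} \<inter> Cs i k))"
proof -
  interpret prob_space M by (rule M)
  let ?S = "\<lambda>i k. {\<omega>\<in>space M. P i \<omega> \<le> al k} \<inter> Cs i k"
  have Ssets: "?S i k \<in> sets M" if "i \<in> I0" "k \<in> {1..d}" for i k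
  proof -
    have "P i \<in> borel_measurable M" using Pm that I0 by blast
    then show ?thesis using Qset Cs_M[OF that(2)] by blast
  qed
  have pw: "real (card (stepup_rejected d al P \<omega> \<inter> I0)) / real (max (card (stepup_rejected d al P \<omega>)) 1)
     = (\<Sum>i\<in>I0. \<Sum>k\<in>{1..d}. (1/real k) * indicator (?S i k) \<omega>)" if "\<omega> \<in> space M" for \<omega>
    unfolding integrand_eq[OF I0 al_mono] using that
    by (intro sum.cong refl) (auto simp: indicator_def)
  have "FDR M d al P I0 = (\<integral>\<omega>. (\<Sum>i\<in>I0. \<Sum>k\<in>{1..d}. (1/real k) * indicator (?S i k) \<omega>) \<partial>M)"
    unfolding FDR_def by (rule Bochner_Integration.integral_cong[OF refl pw])
  also have "\<dots> = (\<Sum>i\<in>I0. \<integral>\<omega>. (\<Sum>k\<in>{1..d}. (1/real k) * indicator (?S i k) \<omega>) \<partial>M)"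
    by (rule Bochner_Integration.integral_sum)
       (auto intro!: Bochner_Integration.integrable_sum integrable_mult_right integrable_real_indicator Ssets
             simp: emeasure_eq_measure)
  also have "\<dots> = (\<Sum>i\<in>I0. \<Sum>k\<in>{1..d}. (1/real k) * measure M (?S i k))"
  proof (rule sum.cong[OF refl])
    fix i assume i: "i \<in> I0"
    have "(\<integral>\<omega>. (\<Sum>k\<in>{1..d}. (1/real k) * indicator (?S i k) \<omega>) \<partial>M)
        = (\<Sum>k\<in>{1..d}. \<integral>\<omega>. (1/real k) * indicator (?S i k) \<omega> \<partial>M)"
      by (rule Bochner_Integration.integral_sum)
         (auto intro!: integrable_mult_right integrable_real_indicator Ssets i simp: emeasure_eq_measure)
    also have "\<dots> = (\<Sum>k\<in>{1..d}. (1/real k) * measure M (?S i k))"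
    proof (rule sum.cong[OF refl])
      fix k assume k: "k \<in> {1..d}"
      have "(\<integral>\<omega>. (1/real k) * indicator (?S i k) \<omega> \<partial>M) = (1/real k) * (\<integral>\<omega>. indicator (?S i k) \<omega> \<partial>M)"
        by (rule Bochner_Integration.integral_mult_right_zero)
      also have "\<dots> = (1/real k) * measure M (?S i k)"
        using Ssets[OF i k] by (simp add: Int_absorb2 sets.sets_into_space)
      finally show "(\<integral>\<omega>. (1/real k) * indicator (?S i k) \<omega> \<partial>M) = (1/real k) * measure M (?S i k)" .
    qed
    finally show "(\<integral>\<omega>. (\<Sum>k\<in>{1..d}. (1/real k) * indicator (?S i k) \<omega>) \<partial>M)
        = (\<Sum>k\<in>{1..d}. (1/real k) * measure M (?S i k))" .
  qed
  finally show ?thesis .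
qed

end

theorem theorem1:
  fixes M :: "'a measure" and d :: nat and P Phat :: "nat \<Rightarrow> 'a \<Rightarrow> real"
    and I0 S :: "nat set" and alpha_t c :: real
  assumes "prob_space M"
    and "d \<ge> 1"
    and "\<And>i. i \<in> {1..d} \<Longrightarrow> P i \<in> borel_measurable M"
    and "I0 \<subseteq> {1..d}"
    and "0 < alpha_t" and "alpha_t < 1"
    and "alpha_t < c" and "c \<le> 1"
    and "S \<subseteq> I0"
    and "\<And>i. i \<in> I0 - S \<Longrightarrow> PLTDN M d P i (P i) c"
    and "\<And>i. i \<in> S \<Longrightarrow> Phat i \<in> borel_measurable M"
    and "\<And>i. i \<in> S \<Longrightarrow> \<exists>h :: (nat \<Rightarrow> real) \<Rightarrow> real \<Rightarrow> real. (\<forall>x. mono (h x)) \<and>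
            (AE \<omega> in M. Phat i \<omega> = h (Pminus d P i \<omega>) (P i \<omega>))"
    and "\<And>i u. i \<in> S \<Longrightarrow> 0 < u \<Longrightarrow> u < c \<Longrightarrow>
            AE \<omega> in M. cond_prob_le M d P i (P i) u \<omega> \<le> cond_prob_le M d P i (Phat i) u \<omega>"
    and "\<And>i. i \<in> S \<Longrightarrow> PLTDN M d P i (Phat i) c"
  shows "FDR M d (\<lambda>k. real k * alpha_t / real d) P I0
           \<le> (\<Sum>i\<in>I0 - S. measure M {\<omega> \<in> space M. P i \<omega> \<le> alpha_t / real d})
             + (\<Sum>i\<in>S. measure M {\<omega> \<in> space M. Phat i \<omega> \<le> alpha_t / real d})"
proof -
  note ctx = assms(1) assms(2) assms(3) assms(5) assms(7)
  let ?al = "\<lambda>k. real k * alpha_t / real d"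
  let ?T = "\<lambda>i. \<Sum>k\<in>{1..d}. (1/real k) * measure M ({\<omega>\<in>space M. P i \<omega> \<le> ?al k} \<inter> {\<omega>\<in>space M. Rfun d ?al i (Pminus d P i \<omega>) = k})"
  have fdr: "FDR M d ?al P I0 = (\<Sum>i\<in>I0. ?T i)"
    by (rule FDR_eq[OF ctx assms(4)])
  have fin: "finite I0" using assms(4) finite_subset by blast
  have split: "(\<Sum>i\<in>I0. ?T i) = (\<Sum>i\<in>I0 - S. ?T i) + (\<Sum>i\<in>S. ?T i)"
    by (rule sum.subset_diff[OF assms(9) fin])
  have al1: "?al 1 = alpha_t / real d" by simp
  have A: "(\<Sum>i\<in>I0 - S. ?T i) \<le> (\<Sum>i\<in>I0 - S. measure M {\<omega> \<in> space M. P i \<omega> \<le> alpha_t / real d})"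
  proof (rule sum_mono)
    fix i assume i: "i \<in> I0 - S"
    then have i1: "i \<in> {1..d}" using assms(4) by blast
    have "?T i \<le> measure M {\<omega> \<in> space M. P i \<omega> \<le> ?al 1}"
      by (rule per_i[OF ctx i1 assms(3)[OF i1] assms(10)[OF i]])
    then show "?T i \<le> measure M {\<omega> \<in> space M. P i \<omega> \<le> alpha_t / real d}" by (simp only: al1)
  qed
  have B: "(\<Sum>i\<in>S. ?T i) \<le> (\<Sum>i\<in>S. measure M {\<omega> \<in> space M. Phat i \<omega> \<le> alpha_t / real d})"
  proof (rule sum_mono)
    fix i assume i: "i \<in> S"
    then have i1: "i \<in> {1..d}" using assms(4,9) by blast
    have Qm: "Phat i \<in> borel_measurable M" by (rule assms(11)[OF i])
    have "?T i \<le> (\<Sum>k\<in>{1..d}. (1/real k) * measure M ({\<omega>\<in>space M. Phat i \<omega> \<le> ?al k} \<inter> {\<omega>\<in>space M. Rfun d ?al i (Pminus d P i \<omega>) = k}))"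
    proof (rule sum_mono)
      fix k assume k: "k \<in> {1..d}"
      have "measure M ({\<omega>\<in>space M. P i \<omega> \<le> ?al k} \<inter> {\<omega>\<in>space M. Rfun d ?al i (Pminus d P i \<omega>) = k})
          \<le> measure M ({\<omega>\<in>space M. Phat i \<omega> \<le> ?al k} \<inter> {\<omega>\<in>space M. Rfun d ?al i (Pminus d P i \<omega>) = k})"
        by (rule replace[OF ctx i1 Qm k assms(13)[OF i]])
      then show "(1/real k) * measure M ({\<omega>\<in>space M. P i \<omega> \<le> ?al k} \<inter> {\<omega>\<in>space M. Rfun d ?al i (Pminus d P i \<omega>) = k})
          \<le> (1/real k) * measure M ({\<omega>\<in>space M. Phat i \<omega> \<le> ?al k} \<inter> {\<omega>\<in>space M. Rfun d ?al i (Pminus d P i \<omega>) = k})"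
        by (rule mult_left_mono) simp
    qed
    also have "\<dots> \<le> measure M {\<omega> \<in> space M. Phat i \<omega> \<le> ?al 1}"
      by (rule per_i[OF ctx i1 Qm assms(14)[OF i]])
    finally show "?T i \<le> measure M {\<omega> \<in> space M. Phat i \<omega> \<le> alpha_t / real d}" by (simp only: al1)
  qed
  show ?thesis unfolding fdr split using A B by (rule add_mono)
qed

end
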